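(* Let $t\in[1,2]$ and assume $\|p_{>I}\|_1\ge\frac1n$. Then, provided $c_I$ is sufficiently small depending only on $\eta$, $$\rho^*_{p,t,n}(\eta)\gtrsim_\eta\frac{\|p_{>I}\|_1^{\frac{2-t}{t}}}{n^{\frac{2t-2}{t}}}.$$
   Context: Binomial model: $N\ge2$, $n\ge2$ even. For $q\in[0,1]^N$ one observes $X_1,\dots,X_n$ i.i.d. in $\{0,1\}^N$ with mutually independent coordinates $X_l(j)\sim\mathrm{Ber}(q_j)$; $\mathbb P_q$ is their joint law. $\|x\|_s=(\sum_j|x_j|^s)^{1/s}$. Known $p\in[0,1]^N$ with $p_1\ge\dots\ge p_N$ and $\max_jp_j\le1/2$; $\eta\in(0,1)$. For a test $\psi:(\{0,1\}^N)^n\to\{0,1\}$, $R_\rho(\psi)=\mathbb P_p(\psi=1)+\sup_{q\in[0,1]^N:\|p-q\|_t\ge\rho}\mathbb P_q(\psi=0)$, $R^*_\rho=\inf_\psi R_\rho(\psi)$, $\rho^*_{p,t,n}(\eta)=\inf\{\rho>0:R^*_\rho\le\eta\}$. $x_{>u}=(0,\dots,0,x_{u+1},\dots,x_N)$. $I=\min\{J\in\{0,\dots,N\}:\sum_{i>J}p_i^2\le c_I/n^2\}$ with $c_I>0$ a small constant depending only on $\eta$. $\gtrsim_\eta$ means up to a positive multiplicative constant depending only on $\eta$. *)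

theory Defs
  imports "HOL-Analysis.Analysis"
begin

text \<open>Coordinates are indexed by j < N (0-based; paper index j+1), samples by l < n.
A data set is a function X :: nat \<Rightarrow> nat \<Rightarrow> bool, X l j = X_{l+1}(j+1),
extended by False outside l < n, j < N.\<close>

definition sample_space :: "nat \<Rightarrow> nat \<Rightarrow> (nat \<Rightarrow> nat \<Rightarrow> bool) set" where
  "sample_space N n = PiE {..<n} (\<lambda>_. PiE {..<N} (\<lambda>_. UNIV))"

definition bin_weight :: "nat \<Rightarrow> nat \<Rightarrow> (nat \<Rightarrow> real) \<Rightarrow> (nat \<Rightarrow> nat \<Rightarrow> bool) \<Rightarrow> real" where
  "bin_weight N n q X = (\<Prod>l<n. \<Prod>j<N. (if X l j then q j else 1 - q j))"

definition bin_prob :: "nat \<Rightarrow> nat \<Rightarrow> (nat \<Rightarrow> real) \<Rightarrow> ((nat \<Rightarrow> nat \<Rightarrow> bool) \<Rightarrow> bool) \<Rightarrow> real" where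
  "bin_prob N n q A = (\<Sum>X\<in>sample_space N n. if A X then bin_weight N n q X else 0)"

definition lt_norm :: "nat \<Rightarrow> real \<Rightarrow> (nat \<Rightarrow> real) \<Rightarrow> real" where
  "lt_norm N s x = (\<Sum>j<N. \<bar>x j\<bar> powr s) powr (1 / s)"

text \<open>Risk of a test psi (True = reject the null, i.e. psi = 1). The supremum over an empty
set of alternatives is taken to be 0 (all probabilities are nonnegative, so inserting 0 does
not change a nonempty supremum).\<close>
definition risk :: "nat \<Rightarrow> nat \<Rightarrow> (nat \<Rightarrow> real) \<Rightarrow> real \<Rightarrow> real \<Rightarrow> ((nat \<Rightarrow> nat \<Rightarrow> bool) \<Rightarrow> bool) \<Rightarrow> real" where
  "risk N n p t \<rho> \<psi> = bin_prob N n p \<psi> +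
     Sup (insert 0 {bin_prob N n q (\<lambda>X. \<not> \<psi> X) | q.
        (\<forall>j<N. 0 \<le> q j \<and> q j \<le> 1) \<and> lt_norm N t (\<lambda>j. p j - q j) \<ge> \<rho>})"

definition minimax_risk :: "nat \<Rightarrow> nat \<Rightarrow> (nat \<Rightarrow> real) \<Rightarrow> real \<Rightarrow> real \<Rightarrow> real" where
  "minimax_risk N n p t \<rho> = Inf {risk N n p t \<rho> \<psi> | \<psi>. True}"

definition critical_radius :: "nat \<Rightarrow> nat \<Rightarrow> (nat \<Rightarrow> real) \<Rightarrow> real \<Rightarrow> real \<Rightarrow> real" where
  "critical_radius N n p t \<eta> = Inf {\<rho>. \<rho> > 0 \<and> minimax_risk N n p t \<rho> \<le> \<eta>}"

text \<open>I = min{J in {0..N} : sum_{i>J} p_i^2 <= c_I / n^2}; with 0-based indices p_{>J} are j in {J..<N}.\<close>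
definition tail_index :: "nat \<Rightarrow> nat \<Rightarrow> (nat \<Rightarrow> real) \<Rightarrow> real \<Rightarrow> nat" where
  "tail_index N n p cI = (LEAST J. J \<le> N \<and> (\<Sum>j\<in>{J..<N}. (p j)^2) \<le> cI / (real n)^2)"

definition tail_l1 :: "nat \<Rightarrow> (nat \<Rightarrow> real) \<Rightarrow> nat \<Rightarrow> real" where
  "tail_l1 N p u = (\<Sum>j\<in>{u..<N}. \<bar>p j\<bar>)"

end

theory Submission
  imports Defs
begin


definition wt :: "real \<Rightarrow> bool \<Rightarrow> real" where "wt q b = (if b then q else 1 - q)"

lemma sum_bool: "(\<Sum>b\<in>(UNIV::bool set). f b) = f True + (f False :: real)"
  by (simp add: UNIV_bool)

lemma PiE_sum_prod:
  assumes "finite A" "\<And>x. x \<in> A \<Longrightarrow> finite (B x)"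
  shows "(\<Sum>g\<in>PiE A B. \<Prod>x\<in>A. f x (g x)) = (\<Prod>x\<in>A. \<Sum>y\<in>B x. (f x y :: real))"
  by (rule prod_sum_PiE[symmetric]) (use assms in auto)

lemma SS_sum:
  "(\<Sum>X\<in>sample_space N n. \<Prod>l<n. \<Prod>j<N. h l j (X l j)) = (\<Prod>l<n. \<Prod>j<N. (h l j True + h l j False :: real))"
proof -
  have "(\<Sum>X\<in>sample_space N n. \<Prod>l<n. \<Prod>j<N. h l j (X l j))
      = (\<Prod>l<n. \<Sum>r\<in>PiE {..<N} (\<lambda>_. UNIV). \<Prod>j<N. h l j (r j))"
    unfolding sample_space_def
    by (rule PiE_sum_prod[where f="\<lambda>l r. \<Prod>j<N. h l j (r j)"]) (auto intro: finite_PiE)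
  also have "\<dots> = (\<Prod>l<n. \<Prod>j<N. \<Sum>b\<in>(UNIV::bool set). h l j b)"
    by (rule prod.cong[OF refl], rule PiE_sum_prod) auto
  finally show ?thesis by (simp add: sum_bool)
qed

lemma bin_weight_wt: "bin_weight N n q X = (\<Prod>l<n. \<Prod>j<N. wt (q j) (X l j))"
  unfolding bin_weight_def wt_def by simp

lemma bin_weight_nonneg: "(\<And>j. j<N \<Longrightarrow> 0 \<le> q j \<and> q j \<le> 1) \<Longrightarrow> 0 \<le> bin_weight N n q X"
  unfolding bin_weight_def by (auto intro!: prod_nonneg)

lemma bin_total: "(\<Sum>X\<in>sample_space N n. bin_weight N n q X) = 1"
  unfolding bin_weight_wt by (subst SS_sum) (simp add: wt_def)

lemma bin_prob_le1:
  assumes "\<And>j. j<N \<Longrightarrow> 0 \<le> q j \<and> q j \<le> 1"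
  shows "bin_prob N n q A \<le> 1" "0 \<le> bin_prob N n q A"
proof -
  have "bin_prob N n q A \<le> (\<Sum>X\<in>sample_space N n. bin_weight N n q X)"
    unfolding bin_prob_def by (rule sum_mono) (use bin_weight_nonneg[OF assms] in auto)
  thus "bin_prob N n q A \<le> 1" using bin_total by simp
  show "0 \<le> bin_prob N n q A"
    unfolding bin_prob_def by (rule sum_nonneg) (use bin_weight_nonneg[OF assms] in auto)
qed

lemma bin_prob_compl: "bin_prob N n q A + bin_prob N n q (\<lambda>X. \<not> A X) = 1"
proof -
  have "bin_prob N n q A + bin_prob N n q (\<lambda>X. \<not> A X) = (\<Sum>X\<in>sample_space N n. bin_weight N n q X)"
    unfolding bin_prob_def by (subst sum.distrib[symmetric]) (rule sum.cong, auto)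
  thus ?thesis using bin_total by simp
qed

lemma bin_marginal:
  assumes "l0 < n" "j0 < N"
  shows "(\<Sum>X\<in>sample_space N n. bin_weight N n q X * (if X l0 j0 then 1 else 0)) = q j0"
proof -
  let ?h = "\<lambda>l j b. wt (q j) b * (if l = l0 \<and> j = j0 \<and> \<not> b then 0 else 1)"
  have eq: "bin_weight N n q X * (if X l0 j0 then 1 else 0) = (\<Prod>l<n. \<Prod>j<N. ?h l j (X l j))" for X
  proof -
    have "(\<Prod>l<n. \<Prod>j<N. ?h l j (X l j)) = (\<Prod>l<n. \<Prod>j<N. wt (q j) (X l j)) *
           (\<Prod>l<n. \<Prod>j<N. (if l = l0 \<and> j = j0 \<and> \<not> X l j then 0 else 1::real))"
      by (simp add: prod.distrib)
    also have "(\<Prod>l<n. \<Prod>j<N. (if l = l0 \<and> j = j0 \<and> \<not> X l j then 0 else 1::real)) = (if X l0 j0 then 1 else 0)"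
    proof -
      have "(\<Prod>l<n. \<Prod>j<N. (if l = l0 \<and> j = j0 \<and> \<not> X l j then 0 else 1::real))
          = (\<Prod>l<n. if l = l0 then (if X l0 j0 then 1 else 0) else 1)"
      proof (rule prod.cong[OF refl])
        fix l assume "l \<in> {..<n}"
        have "(\<Prod>j<N. (if l = l0 \<and> j = j0 \<and> \<not> X l j then 0 else 1::real))
            = (\<Prod>j<N. if j = j0 then (if l = l0 \<and> \<not> X l j0 then 0 else 1) else 1)"
          by (rule prod.cong) auto
        also have "\<dots> = (if l = l0 \<and> \<not> X l j0 then 0 else 1)" using assms by (simp add: prod.delta)
        finally show "(\<Prod>j<N. (if l = l0 \<and> j = j0 \<and> \<not> X l j then 0 else 1::real))
          = (if l = l0 then (if X l0 j0 then 1 else 0) else 1)" by auto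
      qed
      also have "\<dots> = (if X l0 j0 then 1 else 0)" using assms by (simp add: prod.delta)
      finally show ?thesis .
    qed
    finally show ?thesis by (simp add: bin_weight_wt)
  qed
  have "(\<Sum>X\<in>sample_space N n. bin_weight N n q X * (if X l0 j0 then 1 else 0))
        = (\<Prod>l<n. \<Prod>j<N. (?h l j True + ?h l j False))"
    unfolding eq by (rule SS_sum)
  also have "\<dots> = (\<Prod>l<n. if l = l0 then (\<Prod>j<N. if j = j0 then q j0 else 1) else 1)"
  proof (rule prod.cong[OF refl])
    fix l assume "l \<in> {..<n}"
    show "(\<Prod>j<N. (?h l j True + ?h l j False)) = (if l = l0 then (\<Prod>j<N. if j = j0 then q j0 else 1) else 1)"
    proof (cases "l = l0")
      case True
      have "(\<Prod>j<N. (?h l j True + ?h l j False)) = (\<Prod>j<N. if j = j0 then q j0 else 1)"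
        by (rule prod.cong) (auto simp: wt_def True)
      thus ?thesis using True by simp
    next
      case False
      thus ?thesis by (auto simp: wt_def intro!: prod.neutral)
    qed
  qed
  also have "\<dots> = q j0" using assms by (simp add: prod.delta)
  finally show ?thesis .
qed




lemma prod_one_minus_ge:
  assumes "finite I" "\<And>i. i \<in> I \<Longrightarrow> 0 \<le> x i \<and> x i \<le> (1::real)"
  shows "1 - (\<Sum>i\<in>I. x i) \<le> (\<Prod>i\<in>I. 1 - x i)"
  using assms
proof (induction I rule: finite_induct)
  case empty thus ?case by simp
next
  case (insert i I)
  have h: "1 - sum x I \<le> prod (\<lambda>i. 1 - x i) I" using insert by auto
  have p0: "0 \<le> prod (\<lambda>i. 1 - x i) I" using insert by (auto intro!: prod_nonneg)
  have xi: "0 \<le> x i" "x i \<le> 1" using insert by auto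
  have s0: "0 \<le> sum x I" using insert by (auto intro!: sum_nonneg)
  have "1 - (x i + sum x I) \<le> (1 - x i) * (1 - sum x I)" using xi s0 by (simp add: algebra_simps)
  also have "\<dots> \<le> (1 - x i) * prod (\<lambda>i. 1 - x i) I" using h xi by (intro mult_left_mono) auto
  finally show ?case using insert by simp
qed

lemma one_minus_pow_ge: "0 \<le> a \<Longrightarrow> a \<le> 1 \<Longrightarrow> 1 - real m * a \<le> (1 - a::real) ^ m"
  using Bernoulli_inequality[of "-a" m] by simp

lemma column_bound:
  fixes p a :: real and col :: "nat \<Rightarrow> bool"
  assumes p0: "0 \<le> p" and pa: "p \<le> a" and a1: "a \<le> 1" and a0: "0 < a" and np: "real n * p \<le> 1"
  shows "(1 - (if \<forall>l<n. \<not> col l then (real n * p)^2 else real n * a)) * (\<Prod>l<n. wt p (col l))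
     \<le> (1 - p / a) * (\<Prod>l<n. wt 0 (col l)) + (p / a) * (\<Prod>l<n. wt a (col l))"
proof (cases "\<forall>l<n. \<not> col l")
  case True
  have e: "(\<Prod>l<n. wt q (col l)) = (1 - q)^n" for q
    using True by (simp add: wt_def)
  have pi0: "0 \<le> p / a" using p0 a0 by simp
  have "p / a * (1 - real n * a) \<le> p / a * (1 - a)^n"
    using one_minus_pow_ge[of a n] a0 a1 pi0 by (intro mult_left_mono) auto
  hence L: "1 - real n * p \<le> (1 - p / a) * 1 + p / a * (1 - a)^n"
    using a0 by (simp add: algebra_simps)
  have b1: "1 + real n * p \<le> (1 + p)^n" using Bernoulli_inequality[of p n] p0 by simp
  have b2: "(1 - p)^n * (1 + p)^n \<le> 1"
  proof -
    have "(1 - p)^n * (1 + p)^n = (1 - p^2)^n" by (simp add: power_mult_distrib[symmetric] power2_eq_square algebra_simps)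
    also have "\<dots> \<le> 1" using p0 pa a1 by (intro power_le_one) (auto simp: power2_eq_square intro: mult_le_one)
    finally show ?thesis .
  qed
  have q0: "0 \<le> (1 - p)^n" using pa a1 by simp
  have "(1 - p)^n * (1 + real n * p) \<le> 1"
    using b1 b2 q0 by (meson mult_left_mono order_trans)
  hence "(1 - (real n * p)^2) * (1 - p)^n \<le> 1 - real n * p"
  proof -
    assume h: "(1 - p)^n * (1 + real n * p) \<le> 1"
    have "(1 - (real n * p)^2) * (1 - p)^n = (1 - real n * p) * ((1 - p)^n * (1 + real n * p))"
      by (simp add: power2_eq_square algebra_simps)
    also have "\<dots> \<le> (1 - real n * p) * 1" using h np by (intro mult_left_mono) auto
    finally show ?thesis by simp
  qed
  moreover have "(1 - (if \<forall>l<n. \<not> col l then (real n * p)^2 else real n * a)) * (\<Prod>l<n. wt p (col l))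
      = (1 - (real n * p)^2) * (1 - p)^n" using True e[of p] by (simp only: if_True) simp
  moreover have "(1 - p / a) * (\<Prod>l<n. wt 0 (col l)) + (p / a) * (\<Prod>l<n. wt a (col l))
      = (1 - p / a) * 1 + p / a * (1 - a)^n" by (simp only: e) simp
  ultimately show ?thesis using L by linarith
next
  case False
  then obtain l0 where l0: "l0 < n" "col l0" by auto
  have fin: "finite {..<n}" by simp
  have z: "(\<Prod>l<n. wt 0 (col l)) = 0"
    using l0 by (intro prod_zero) (auto simp: wt_def intro!: bexI[of _ l0])
  let ?R = "{..<n} - {l0}"
  have sp: "(\<Prod>l<n. wt q (col l)) = q * (\<Prod>l\<in>?R. wt q (col l))" for q
    using prod.remove[OF fin, of l0 "\<lambda>l. wt q (col l)"] l0 by (simp add: wt_def)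
  have Rp0: "0 \<le> (\<Prod>l\<in>?R. wt p (col l))"
    using p0 pa a1 by (intro prod_nonneg) (auto simp: wt_def)
  have "(\<Prod>l\<in>?R. (1 - a) * wt p (col l)) \<le> (\<Prod>l\<in>?R. wt a (col l))"
  proof (rule prod_mono)
    fix l assume "l \<in> ?R"
    show "0 \<le> (1 - a) * wt p (col l) \<and> (1 - a) * wt p (col l) \<le> wt a (col l)"
    proof (cases "col l")
      case True
      have "(1 - a) * p \<le> 1 * p" using p0 a0 by (intro mult_right_mono) auto
      thus ?thesis using True p0 pa a1 a0 by (simp add: wt_def)
    next
      case False
      have "(1 - a) * (1 - p) \<le> (1 - a) * 1" using p0 a1 by (intro mult_left_mono) auto
      thus ?thesis using False p0 pa a1 by (simp add: wt_def)
    qed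
  qed
  hence R1: "(1 - a)^(n-1) * (\<Prod>l\<in>?R. wt p (col l)) \<le> (\<Prod>l\<in>?R. wt a (col l))"
    using l0 by (simp add: prod.distrib card_Diff_singleton)
  have "1 - real n * a \<le> (1 - a)^(n-1)"
  proof -
    have "1 - real (n-1) * a \<le> (1 - a)^(n-1)" by (rule one_minus_pow_ge) (use a0 a1 in auto)
    moreover have "real (n-1) * a \<le> real n * a" using a0 by (intro mult_right_mono) auto
    ultimately show ?thesis by linarith
  qed
  hence "(1 - real n * a) * (\<Prod>l\<in>?R. wt p (col l)) \<le> (1 - a)^(n-1) * (\<Prod>l\<in>?R. wt p (col l))"
    using Rp0 by (intro mult_right_mono) auto
  hence "(1 - real n * a) * (\<Prod>l\<in>?R. wt p (col l)) \<le> (\<Prod>l\<in>?R. wt a (col l))" using R1 by linarith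
  hence "p * ((1 - real n * a) * (\<Prod>l\<in>?R. wt p (col l))) \<le> p * (\<Prod>l\<in>?R. wt a (col l))"
    using p0 by (intro mult_left_mono) auto
  moreover have "p / a * (a * (\<Prod>l\<in>?R. wt a (col l))) = p * (\<Prod>l\<in>?R. wt a (col l))" using a0 by simp
  ultimately have "(1 - real n * a) * (p * (\<Prod>l\<in>?R. wt p (col l)))
      \<le> (1 - p / a) * 0 + p / a * (a * (\<Prod>l\<in>?R. wt a (col l)))" by (simp add: algebra_simps)
  moreover have "(if \<forall>l<n. \<not> col l then (real n * p)^2 else real n * a) = real n * a" using l0 by auto
  ultimately show ?thesis by (simp only: z sp)
qed




definition SG :: "nat \<Rightarrow> (nat \<Rightarrow> bool) set" where "SG N = PiE {..<N} (\<lambda>_. UNIV)"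
definition mu :: "nat \<Rightarrow> (nat \<Rightarrow> real) \<Rightarrow> (nat \<Rightarrow> bool) \<Rightarrow> real" where
  "mu N pr \<sigma> = (\<Prod>j<N. wt (pr j) (\<sigma> j))"

lemma finite_SG: "finite (SG N)" unfolding SG_def by (auto intro: finite_PiE)

lemma mix_general:
  "(\<Sum>\<sigma>\<in>SG N. \<Prod>j<N. wt (pr j) (\<sigma> j) * F j (\<sigma> j)) = (\<Prod>j<N. (1 - pr j) * F j False + pr j * F j True)"
  unfolding SG_def by (subst PiE_sum_prod) (auto simp: sum_bool wt_def add.commute)

lemma mu_total: "(\<Sum>\<sigma>\<in>SG N. mu N pr \<sigma>) = 1"
  using mix_general[where N=N and pr=pr and F="\<lambda>_ _. 1"] by (simp add: mu_def)

lemma mu_nonneg: "(\<And>j. j < N \<Longrightarrow> 0 \<le> pr j \<and> pr j \<le> 1) \<Longrightarrow> 0 \<le> mu N pr \<sigma>"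
  unfolding mu_def by (auto intro!: prod_nonneg simp: wt_def)

lemma mix_eq:
  "(\<Sum>\<sigma>\<in>SG N. mu N pr \<sigma> * bin_weight N n (\<lambda>j. v j (\<sigma> j)) X)
   = (\<Prod>j<N. (1 - pr j) * (\<Prod>l<n. wt (v j False) (X l j)) + pr j * (\<Prod>l<n. wt (v j True) (X l j)))"
proof -
  have "mu N pr \<sigma> * bin_weight N n (\<lambda>j. v j (\<sigma> j)) X = (\<Prod>j<N. wt (pr j) (\<sigma> j) * (\<Prod>l<n. wt (v j (\<sigma> j)) (X l j)))" for \<sigma>
    unfolding mu_def bin_weight_wt by (subst prod.swap) (simp add: prod.distrib)
  thus ?thesis using mix_general[where N=N and pr=pr and F="\<lambda>j b. \<Prod>l<n. wt (v j b) (X l j)"] by simp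
qed

lemma risk_lower:
  fixes N n :: nat and p :: "nat \<Rightarrow> real" and pr :: "nat \<Rightarrow> real" and v :: "nat \<Rightarrow> bool \<Rightarrow> real"
    and D :: "(nat \<Rightarrow> nat \<Rightarrow> bool) \<Rightarrow> real"
  assumes pi01: "\<And>j. j < N \<Longrightarrow> 0 \<le> pr j \<and> pr j \<le> 1"
    and v01: "\<And>j b. j < N \<Longrightarrow> 0 \<le> v j b \<and> v j b \<le> 1"
    and p01: "\<And>j. j < N \<Longrightarrow> 0 \<le> p j \<and> p j \<le> 1"
    and Dnn: "\<And>X. 0 \<le> D X"
    and mixb: "\<And>X. X \<in> sample_space N n \<Longrightarrow>
        (1 - D X) * bin_weight N n p X \<le> (\<Sum>\<sigma>\<in>SG N. mu N pr \<sigma> * bin_weight N n (\<lambda>j. v j (\<sigma> j)) X)"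
    and Db: "(\<Sum>X\<in>sample_space N n. D X * bin_weight N n p X) \<le> \<Delta>"
    and Bad: "(\<Sum>\<sigma>\<in>SG N. mu N pr \<sigma> * (if lt_norm N t (\<lambda>j. p j - v j (\<sigma> j)) \<ge> \<rho> then 0 else 1)) \<le> \<beta>"
  shows "1 - \<Delta> - \<beta> \<le> risk N n p t \<rho> \<psi>"
proof -
  let ?S = "{bin_prob N n q (\<lambda>X. \<not> \<psi> X) | q. (\<forall>j<N. 0 \<le> q j \<and> q j \<le> 1) \<and> lt_norm N t (\<lambda>j. p j - q j) \<ge> \<rho>}"
  let ?s = "Sup (insert 0 ?S)"
  let ?Q = "\<lambda>\<sigma>. bin_prob N n (\<lambda>j. v j (\<sigma> j)) (\<lambda>X. \<not> \<psi> X)"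
  let ?g = "\<lambda>\<sigma>. lt_norm N t (\<lambda>j. p j - v j (\<sigma> j)) \<ge> \<rho>"
  have bdd: "bdd_above (insert 0 ?S)"
    by (rule bdd_aboveI[of _ 1]) (auto intro: bin_prob_le1)
  have s0: "0 \<le> ?s" using bdd by (intro cSup_upper) auto
  have Qle: "?Q \<sigma> \<le> 1" "0 \<le> ?Q \<sigma>" for \<sigma> using v01 by (auto intro!: bin_prob_le1)
  have good: "?Q \<sigma> \<le> ?s" if "?g \<sigma>" for \<sigma>
    using that v01 bdd by (intro cSup_upper) auto
  have mu0: "0 \<le> mu N pr \<sigma>" for \<sigma> using pi01 by (rule mu_nonneg)
  have "(\<Sum>\<sigma>\<in>SG N. mu N pr \<sigma> * ?Q \<sigma>) \<le> (\<Sum>\<sigma>\<in>SG N. mu N pr \<sigma> * ?s + mu N pr \<sigma> * (if ?g \<sigma> then 0 else 1))"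
  proof (rule sum_mono)
    fix \<sigma> show "mu N pr \<sigma> * ?Q \<sigma> \<le> mu N pr \<sigma> * ?s + mu N pr \<sigma> * (if ?g \<sigma> then 0 else 1)"
    proof (cases "?g \<sigma>")
      case True thus ?thesis using good[OF True] mu0[of \<sigma>] by (simp add: mult_left_mono)
    next
      case False
      have "mu N pr \<sigma> * ?Q \<sigma> \<le> mu N pr \<sigma> * 1" using Qle[of \<sigma>] mu0[of \<sigma>] by (intro mult_left_mono) auto
      moreover have "0 \<le> mu N pr \<sigma> * ?s" using mu0[of \<sigma>] s0 by simp
      ultimately show ?thesis using False by simp
    qed
  qed
  also have "\<dots> = ?s * (\<Sum>\<sigma>\<in>SG N. mu N pr \<sigma>) + (\<Sum>\<sigma>\<in>SG N. mu N pr \<sigma> * (if ?g \<sigma> then 0 else 1))"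
    by (simp add: sum.distrib sum_distrib_right mult.commute)
  also have "\<dots> \<le> ?s + \<beta>" using Bad by (simp add: mu_total)
  finally have up: "(\<Sum>\<sigma>\<in>SG N. mu N pr \<sigma> * ?Q \<sigma>) \<le> ?s + \<beta>" .
  have "(\<Sum>\<sigma>\<in>SG N. mu N pr \<sigma> * ?Q \<sigma>)
      = (\<Sum>X\<in>sample_space N n. if \<psi> X then 0 else (\<Sum>\<sigma>\<in>SG N. mu N pr \<sigma> * bin_weight N n (\<lambda>j. v j (\<sigma> j)) X))"
    unfolding bin_prob_def by (simp add: sum_distrib_left if_distrib cong: if_cong) (subst sum.swap, auto intro!: sum.cong)
  also have "\<dots> \<ge> (\<Sum>X\<in>sample_space N n. if \<psi> X then 0 else (1 - D X) * bin_weight N n p X)"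
    by (rule sum_mono) (auto intro: mixb)
  finally have lo: "(\<Sum>X\<in>sample_space N n. if \<psi> X then 0 else (1 - D X) * bin_weight N n p X) \<le> (\<Sum>\<sigma>\<in>SG N. mu N pr \<sigma> * ?Q \<sigma>)" .
  have bw0: "0 \<le> bin_weight N n p X" for X using p01 by (rule bin_weight_nonneg)
  have "(\<Sum>X\<in>sample_space N n. if \<psi> X then 0 else (1 - D X) * bin_weight N n p X)
     = bin_prob N n p (\<lambda>X. \<not> \<psi> X) - (\<Sum>X\<in>sample_space N n. if \<psi> X then 0 else D X * bin_weight N n p X)"
    unfolding bin_prob_def by (simp add: sum_subtractf[symmetric] algebra_simps if_distrib cong: if_cong)
  moreover have "(\<Sum>X\<in>sample_space N n. if \<psi> X then 0 else D X * bin_weight N n p X) \<le> \<Delta>"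
    using Db by (smt (verit, ccfv_SIG) Dnn bw0 mult_nonneg_nonneg sum_mono)
  ultimately have "bin_prob N n p (\<lambda>X. \<not> \<psi> X) - \<Delta> \<le> ?s + \<beta>" using lo up by linarith
  thus ?thesis using bin_prob_compl[of N n p \<psi>] unfolding risk_def by linarith
qed




locale inst =
  fixes N n :: nat and p :: "nat \<Rightarrow> real" and T :: "nat set" and c \<epsilon> :: real
  assumes n1: "1 \<le> n"
    and p01: "\<And>j. j < N \<Longrightarrow> 0 \<le> p j \<and> p j \<le> 1/2"
    and TN: "T \<subseteq> {..<N}"
    and sq: "(\<Sum>j\<in>T. (p j)^2) \<le> c / (real n)^2"
    and c4: "c \<le> 1/4"
    and Lb: "1 / real n \<le> (\<Sum>j\<in>T. p j)"
    and e0: "0 < \<epsilon>" and e1: "\<epsilon> \<le> 1"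
begin

definition "L = (\<Sum>j\<in>T. p j)"
definition "a = \<epsilon> / ((real n)^2 * L)"
definition "aj j = max a (2 * p j)"
definition "pr j = (if j \<in> T then p j / aj j else 0)"
definition "v j b = (if j \<in> T then (if b then aj j else 0) else p j)"
definition "xx j X = (if j \<in> T then (if \<forall>l<n. \<not> X l j then (real n * p j)^2 else real n * aj j) else 0)"
definition "DD X = (\<Sum>j<N. xx j X)"

lemma finT: "finite T" using TN finite_subset by blast

lemma nL: "1 \<le> real n * L"
  using Lb n1 unfolding L_def by (simp add: field_simps)

lemma L0: "0 < L"
proof (rule ccontr)
  assume "\<not> 0 < L"
  hence "real n * L \<le> 0" by (simp add: mult_nonneg_nonpos)
  thus False using nL by linarith
qed

lemma a0: "0 < a" unfolding a_def using e0 L0 n1 by simp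

lemma na: "real n * a \<le> \<epsilon>"
proof -
  have "real n * a = \<epsilon> / (real n * L)" unfolding a_def using n1 by (simp add: power2_eq_square field_simps)
  also have "\<dots> \<le> \<epsilon> / 1" using nL e0 by (intro divide_left_mono) auto
  finally show ?thesis by simp
qed

lemma a1: "a \<le> 1"
proof -
  have "real n * a \<le> 1" using na e1 by linarith
  moreover have "a \<le> real n * a" using a0 n1 by simp
  ultimately show ?thesis by linarith
qed

lemma np_half: "j \<in> T \<Longrightarrow> real n * p j \<le> 1/2"
proof -
  assume j: "j \<in> T"
  have "(p j)^2 \<le> (\<Sum>j\<in>T. (p j)^2)" using j finT by (intro member_le_sum) auto
  hence h: "(p j)^2 \<le> c / (real n)^2" using sq by linarith
  have "(real n * p j)^2 = (real n)^2 * (p j)^2" by (simp add: power_mult_distrib)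
  also have "\<dots> \<le> (real n)^2 * (c / (real n)^2)" using h by (intro mult_left_mono) auto
  also have "\<dots> = c" using n1 by simp
  finally have "(real n * p j)^2 \<le> c" .
  hence "(real n * p j)^2 \<le> (1/2)^2" using c4 by (simp add: power2_eq_square)
  moreover have "0 \<le> real n * p j" using j TN p01 by auto
  ultimately show ?thesis using power2_le_imp_le by fastforce
qed

lemma pT: "j \<in> T \<Longrightarrow> 0 \<le> p j \<and> p j \<le> 1/2" using TN p01 by auto
lemma p1: "j < N \<Longrightarrow> 0 \<le> p j \<and> p j \<le> 1" using p01[of j] by auto

lemma aj_props: assumes "j \<in> T"
  shows "0 < aj j" "2 * p j \<le> aj j" "p j \<le> aj j" "aj j \<le> 1" "real n * aj j \<le> 1" "aj j \<le> a + 2 * p j"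
proof -
  show "0 < aj j" "2 * p j \<le> aj j" using a0 unfolding aj_def by auto
  thus "p j \<le> aj j" using pT[OF assms] by linarith
  show "aj j \<le> 1" using a1 pT[OF assms] unfolding aj_def by auto
  show "real n * aj j \<le> 1" using na e1 np_half[OF assms] unfolding aj_def by (auto simp: max_def)
  show "aj j \<le> a + 2 * p j" using a0 pT[OF assms] unfolding aj_def by auto
qed

lemma pr01: "j < N \<Longrightarrow> 0 \<le> pr j \<and> pr j \<le> 1"
proof (cases "j \<in> T")
  case True thus ?thesis unfolding pr_def using aj_props[OF True] pT[OF True] by (auto simp: divide_le_eq_1)
qed (simp add: pr_def)

lemma v01: "j < N \<Longrightarrow> 0 \<le> v j b \<and> v j b \<le> 1"
proof (cases "j \<in> T")
  case True thus ?thesis unfolding v_def using aj_props[OF True] by auto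
qed (auto simp: v_def p1)

lemma xx01: "0 \<le> xx j X \<and> xx j X \<le> 1"
proof (cases "j \<in> T")
  case True
  have "(real n * p j)^2 \<le> 1" using np_half[OF True] pT[OF True] n1
    by (intro power_le_one) auto
  thus ?thesis using True aj_props[OF True] unfolding xx_def by auto
qed (simp add: xx_def)

lemma DD0: "0 \<le> DD X" unfolding DD_def using xx01 by (auto intro: sum_nonneg)

lemma mixb:
  "(1 - DD X) * bin_weight N n p X \<le> (\<Sum>\<sigma>\<in>SG N. mu N pr \<sigma> * bin_weight N n (\<lambda>j. v j (\<sigma> j)) X)"
proof -
  let ?P = "\<lambda>j. \<Prod>l<n. wt (p j) (X l j)"
  have bw: "bin_weight N n p X = (\<Prod>j<N. ?P j)" unfolding bin_weight_wt by (subst prod.swap) simp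
  have "(\<Prod>j<N. (1 - xx j X) * ?P j) \<le> (\<Prod>j<N. (1 - pr j) * (\<Prod>l<n. wt (v j False) (X l j)) + pr j * (\<Prod>l<n. wt (v j True) (X l j)))"
  proof (rule prod_mono)
    fix j assume j: "j \<in> {..<N}"
    have P0: "0 \<le> ?P j" using p1 j by (auto intro!: prod_nonneg simp: wt_def)
    show "0 \<le> (1 - xx j X) * ?P j \<and> (1 - xx j X) * ?P j \<le> (1 - pr j) * (\<Prod>l<n. wt (v j False) (X l j)) + pr j * (\<Prod>l<n. wt (v j True) (X l j))"
    proof (cases "j \<in> T")
      case True
      have "(1 - xx j X) * ?P j \<le> (1 - p j / aj j) * (\<Prod>l<n. wt 0 (X l j)) + (p j / aj j) * (\<Prod>l<n. wt (aj j) (X l j))"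
      proof -
        have "(1 - (if \<forall>l<n. \<not> X l j then (real n * p j)^2 else real n * aj j)) * ?P j \<le> (1 - p j / aj j) * (\<Prod>l<n. wt 0 (X l j)) + (p j / aj j) * (\<Prod>l<n. wt (aj j) (X l j))"
          using aj_props[OF True] pT[OF True] np_half[OF True]
          by (intro column_bound[where col = "\<lambda>l. X l j"]) auto
        thus ?thesis unfolding xx_def using True by simp
      qed
      thus ?thesis using True xx01[of j X] P0 unfolding pr_def v_def by auto
    next
      case False thus ?thesis using P0 unfolding xx_def pr_def v_def by simp
    qed
  qed
  moreover have "(\<Prod>j<N. (1 - xx j X) * ?P j) = (\<Prod>j<N. 1 - xx j X) * bin_weight N n p X"
    by (simp add: bw prod.distrib)
  moreover have "(1 - DD X) * bin_weight N n p X \<le> (\<Prod>j<N. 1 - xx j X) * bin_weight N n p X"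
    unfolding DD_def using prod_one_minus_ge[of "{..<N}" "\<lambda>j. xx j X"] xx01 bin_weight_nonneg[of N p n X] p1
    by (intro mult_right_mono) auto
  ultimately show ?thesis by (simp add: mix_eq)
qed

end



context inst begin

lemma sum_T: "(\<Sum>j<N. if j \<in> T then f j else 0) = (\<Sum>j\<in>T. (f j::real))"
  using TN by (simp add: sum.If_cases Int_absorb1)

lemma Db: "(\<Sum>X\<in>sample_space N n. DD X * bin_weight N n p X) \<le> 3 * c + \<epsilon>"
proof -
  let ?y = "\<lambda>j X. if j \<in> T then (real n * p j)^2 + real n * aj j * (\<Sum>l<n. if X l j then 1 else 0) else 0"
  have bw0: "0 \<le> bin_weight N n p X" for X using p1 by (rule bin_weight_nonneg)
  have xy: "xx j X \<le> ?y j X" for j X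
  proof (cases "j \<in> T")
    case True
    have s0: "0 \<le> (\<Sum>l<n. if X l j then 1 else (0::real))" by (rule sum_nonneg) auto
    show ?thesis
    proof (cases "\<forall>l<n. \<not> X l j")
      case True2: True
      have "0 \<le> real n * aj j * (\<Sum>l<n. if X l j then 1 else (0::real))"
        using aj_props[OF True] s0 by auto
      thus ?thesis using True True2 unfolding xx_def by simp
    next
      case False
      then obtain l0 where l0: "l0 < n" "X l0 j" by auto
      have "1 \<le> (\<Sum>l<n. if X l j then 1 else (0::real))"
        using member_le_sum[of l0 "{..<n}" "\<lambda>l. if X l j then 1 else (0::real)"] l0 by auto
      hence A: "real n * aj j * 1 \<le> real n * aj j * (\<Sum>l<n. if X l j then 1 else (0::real))"
        using aj_props[OF True] by (intro mult_left_mono) auto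
      have B: "0 \<le> (real n * p j)^2" by simp
      have C: "xx j X = real n * aj j" using True l0 by (auto simp: xx_def)
      have D: "?y j X = (real n * p j)^2 + real n * aj j * (\<Sum>l<n. if X l j then 1 else (0::real))" using True by simp
      show ?thesis using A B C D by linarith
    qed
  qed (simp add: xx_def)
  have "(\<Sum>X\<in>sample_space N n. DD X * bin_weight N n p X) \<le> (\<Sum>X\<in>sample_space N n. (\<Sum>j<N. ?y j X) * bin_weight N n p X)"
    unfolding DD_def by (intro sum_mono mult_right_mono sum_mono xy bw0)
  also have "\<dots> = (\<Sum>j<N. \<Sum>X\<in>sample_space N n. ?y j X * bin_weight N n p X)"
    by (simp add: sum_distrib_right) (rule sum.swap)
  also have "\<dots> = (\<Sum>j<N. if j \<in> T then (real n * p j)^2 + real n * aj j * (real n * p j) else 0)"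
  proof (rule sum.cong[OF refl])
    fix j assume j: "j \<in> {..<N}"
    show "(\<Sum>X\<in>sample_space N n. ?y j X * bin_weight N n p X) = (if j \<in> T then (real n * p j)^2 + real n * aj j * (real n * p j) else 0)"
    proof (cases "j \<in> T")
      case True
      have "(\<Sum>X\<in>sample_space N n. ?y j X * bin_weight N n p X)
         = (real n * p j)^2 * (\<Sum>X\<in>sample_space N n. bin_weight N n p X)
           + real n * aj j * (\<Sum>l<n. \<Sum>X\<in>sample_space N n. bin_weight N n p X * (if X l j then 1 else 0))"
        using True by (simp add: algebra_simps sum.distrib sum_distrib_left sum_distrib_right) (subst sum.swap, simp)
      also have "\<dots> = (real n * p j)^2 + real n * aj j * (real n * p j)"
        using j by (simp add: bin_total bin_marginal)
      finally show ?thesis using True by simp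
    qed simp
  qed
  also have "\<dots> = (\<Sum>j\<in>T. (real n * p j)^2 + real n * aj j * (real n * p j))" by (rule sum_T)
  also have "\<dots> \<le> (\<Sum>j\<in>T. 3 * ((real n)^2 * (p j)^2) + (real n)^2 * a * p j)"
  proof (rule sum_mono)
    fix j assume j: "j \<in> T"
    have "aj j * p j \<le> (a + 2 * p j) * p j" using aj_props[OF j] pT[OF j] by (intro mult_right_mono) auto
    hence "(real n)^2 * (aj j * p j) \<le> (real n)^2 * ((a + 2 * p j) * p j)" by (intro mult_left_mono) auto
    thus "(real n * p j)^2 + real n * aj j * (real n * p j) \<le> 3 * ((real n)^2 * (p j)^2) + (real n)^2 * a * p j"
      by (simp add: power2_eq_square algebra_simps)
  qed
  also have "\<dots> = 3 * ((real n)^2 * (\<Sum>j\<in>T. (p j)^2)) + (real n)^2 * a * L"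
    unfolding L_def by (simp add: sum.distrib sum_distrib_left)
  also have "\<dots> \<le> 3 * c + \<epsilon>"
  proof -
    have "(real n)^2 * (\<Sum>j\<in>T. (p j)^2) \<le> (real n)^2 * (c / (real n)^2)" using sq by (intro mult_left_mono) auto
    hence "(real n)^2 * (\<Sum>j\<in>T. (p j)^2) \<le> c" using n1 by simp
    moreover have "(real n)^2 * a * L = \<epsilon>" unfolding a_def using L0 n1 by simp
    ultimately show ?thesis by linarith
  qed
  finally show ?thesis .
qed

end



lemma exp_m1_le: "exp (-1::real) \<le> 1/2"
proof -
  have "2 \<le> exp (1::real)" using exp_ge_add_one_self[of 1] by simp
  thus ?thesis by (simp add: exp_minus field_simps)
qed

lemma lt_norm_ge:
  assumes "0 < \<rho>" "1 \<le> t" "\<rho> powr t \<le> (\<Sum>j<N. \<bar>x j\<bar> powr t)"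
  shows "\<rho> \<le> lt_norm N t x"
proof -
  have "(\<rho> powr t) powr (1/t) \<le> (\<Sum>j<N. \<bar>x j\<bar> powr t) powr (1/t)"
    using assms by (intro powr_mono2) auto
  moreover have "(\<rho> powr t) powr (1/t) = \<rho>" using assms by (simp add: powr_powr)
  ultimately show ?thesis unfolding lt_norm_def by simp
qed

context inst begin

definition "S = {j \<in> T. 2 * p j \<le> a}"
definition "cnt \<sigma> = (\<Sum>j\<in>S. if \<sigma> j then 1 else (0::real))"

lemma finS: "finite S" unfolding S_def using finT by simp
lemma ST: "S \<subseteq> T" unfolding S_def by auto

lemma dist_lower:
  assumes t1: "1 \<le> t"
  shows "(a/2) powr (t-1) * ((\<Sum>j\<in>T-S. p j) + (a/2) * cnt \<sigma>) \<le> (\<Sum>j<N. \<bar>p j - v j (\<sigma> j)\<bar> powr t)"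
proof -
  let ?h = "(a/2) powr (t-1)"
  let ?f = "\<lambda>j. \<bar>p j - v j (\<sigma> j)\<bar> powr t"
  have "(\<Sum>j\<in>T. ?f j) \<le> (\<Sum>j<N. ?f j)" using TN by (intro sum_mono2) auto
  moreover have "(\<Sum>j\<in>T. ?f j) = (\<Sum>j\<in>T-S. ?f j) + (\<Sum>j\<in>S. ?f j)"
    by (rule sum.subset_diff[OF ST finT])
  moreover have "?h * (\<Sum>j\<in>T-S. p j) \<le> (\<Sum>j\<in>T-S. ?f j)"
    unfolding sum_distrib_left
  proof (rule sum_mono)
    fix j assume j: "j \<in> T - S"
    hence jT: "j \<in> T" and pa: "a < 2 * p j" unfolding S_def by auto
    have pp: "0 < p j" using pa a0 by simp
    have "p j \<le> \<bar>p j - v j (\<sigma> j)\<bar>" using aj_props[OF jT] pT[OF jT] unfolding v_def using jT by auto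
    hence "p j powr t \<le> ?f j" using pp t1 by (intro powr_mono2) auto
    moreover have "p j powr t = p j * p j powr (t-1)" using pp by (simp add: powr_diff field_simps powr_one)
    moreover have "?h \<le> p j powr (t-1)" using pa a0 t1 by (intro powr_mono2) auto
    moreover have "?h * p j \<le> p j powr (t-1) * p j" using \<open>?h \<le> p j powr (t-1)\<close> pp by (intro mult_right_mono) auto
    ultimately show "?h * p j \<le> ?f j" by (simp add: mult.commute)
  qed
  moreover have "?h * ((a/2) * cnt \<sigma>) \<le> (\<Sum>j\<in>S. ?f j)"
    unfolding cnt_def sum_distrib_left
  proof (rule sum_mono)
    fix j assume j: "j \<in> S"
    hence jT: "j \<in> T" and pa: "2 * p j \<le> a" unfolding S_def by auto
    have aj: "aj j = a" using pa unfolding aj_def by simp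
    show "?h * (a / 2 * (if \<sigma> j then 1 else 0)) \<le> ?f j"
    proof (cases "\<sigma> j")
      case True
      have "v j (\<sigma> j) = a" using True jT aj unfolding v_def by auto
      hence "a/2 \<le> \<bar>p j - v j (\<sigma> j)\<bar>" using pa by linarith
      hence "(a/2) powr t \<le> ?f j" using a0 t1 by (intro powr_mono2) auto
      moreover have "(a/2) powr t = ?h * (a/2)" using a0 by (simp add: powr_diff field_simps powr_one)
      ultimately show ?thesis using True by simp
    qed simp
  qed
  ultimately show ?thesis by (simp add: algebra_simps)
qed

end



context inst begin

lemma exp_cnt: "exp (- cnt \<sigma>) = (\<Prod>j<N. if j \<in> S \<and> \<sigma> j then exp (-1) else 1)"
proof -
  have "exp (- cnt \<sigma>) = (\<Prod>j\<in>S. exp (- (if \<sigma> j then 1 else 0)))"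
    unfolding cnt_def by (simp add: exp_sum[OF finS, symmetric] sum_negf)
  also have "\<dots> = (\<Prod>j\<in>S. if \<sigma> j then exp (-1) else 1)" by (rule prod.cong) auto
  also have "\<dots> = (\<Prod>j\<in>{..<N} \<inter> S. if \<sigma> j then exp (-1) else 1)"
    using ST TN by (simp add: Int_absorb1)
  also have "\<dots> = (\<Prod>j<N. if j \<in> S then (if \<sigma> j then exp (-1) else 1) else 1)"
    by (rule prod.inter_restrict) simp
  finally show ?thesis by (auto intro!: prod.cong)
qed

lemma mu_exp_cnt: "(\<Sum>\<sigma>\<in>SG N. mu N pr \<sigma> * exp (- cnt \<sigma>)) \<le> exp (- (\<Sum>j\<in>S. pr j) / 2)"
proof -
  let ?F = "\<lambda>j b. if j \<in> S \<and> b then exp (-1) else (1::real)"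
  have "(\<Sum>\<sigma>\<in>SG N. mu N pr \<sigma> * exp (- cnt \<sigma>)) = (\<Sum>\<sigma>\<in>SG N. \<Prod>j<N. wt (pr j) (\<sigma> j) * ?F j (\<sigma> j))"
    unfolding mu_def exp_cnt by (simp add: prod.distrib)
  also have "\<dots> = (\<Prod>j<N. (1 - pr j) * ?F j False + pr j * ?F j True)" by (rule mix_general)
  also have "\<dots> \<le> (\<Prod>j<N. if j \<in> S then exp (- pr j / 2) else 1)"
  proof (rule prod_mono)
    fix j assume j: "j \<in> {..<N}"
    have pr: "0 \<le> pr j" "pr j \<le> 1" using pr01 j by auto
    have e: "exp (-1::real) \<le> 1/2" "0 < exp (-1::real)" using exp_m1_le by auto
    show "0 \<le> (1 - pr j) * ?F j False + pr j * ?F j True \<and>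
          (1 - pr j) * ?F j False + pr j * ?F j True \<le> (if j \<in> S then exp (- pr j / 2) else 1)"
    proof (cases "j \<in> S")
      case True
      have "pr j * exp (-1) \<le> pr j * (1/2)" using pr e by (intro mult_left_mono) auto
      moreover have "1 + (- pr j / 2) \<le> exp (- pr j / 2)" by (rule exp_ge_add_one_self)
      moreover have "0 \<le> pr j * exp (-1)" using pr e by simp
      ultimately show ?thesis using True pr by simp
    qed simp
  qed
  also have "\<dots> = (\<Prod>j\<in>{..<N} \<inter> S. exp (- pr j / 2))"
    by (rule prod.inter_restrict[symmetric]) simp
  also have "\<dots> = (\<Prod>j\<in>S. exp (- pr j / 2))" using ST TN by (simp add: Int_absorb1)
  also have "\<dots> = exp (- (\<Sum>j\<in>S. pr j) / 2)"
    by (simp add: exp_sum[OF finS, symmetric] sum_negf sum_divide_distrib)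
  finally show ?thesis .
qed

lemma Bad:
  assumes t1: "1 \<le> t" and r0: "0 < \<rho>" and hr: "\<rho> powr t \<le> (L/16) * (a/2) powr (t-1)"
  shows "(\<Sum>\<sigma>\<in>SG N. mu N pr \<sigma> * (if \<rho> \<le> lt_norm N t (\<lambda>j. p j - v j (\<sigma> j)) then 0 else 1)) \<le> 8 * \<epsilon>"
proof -
  let ?h = "(a/2) powr (t-1)"
  have h0: "0 < ?h" using a0 by simp
  have mu0: "0 \<le> mu N pr \<sigma>" for \<sigma> using pr01 by (rule mu_nonneg)
  have cnt0: "0 \<le> cnt \<sigma>" for \<sigma> unfolding cnt_def by (rule sum_nonneg) auto
  have goodI: "\<rho> \<le> lt_norm N t (\<lambda>j. p j - v j (\<sigma> j))" if "L/16 \<le> (\<Sum>j\<in>T-S. p j) + (a/2) * cnt \<sigma>" for \<sigma>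
  proof (rule lt_norm_ge[OF r0 t1])
    have "\<rho> powr t \<le> ?h * (L/16)" using hr by (simp add: mult.commute)
    also have "\<dots> \<le> ?h * ((\<Sum>j\<in>T-S. p j) + (a/2) * cnt \<sigma>)" using that h0 by (intro mult_left_mono) auto
    also have "\<dots> \<le> (\<Sum>j<N. \<bar>p j - v j (\<sigma> j)\<bar> powr t)" by (rule dist_lower[OF t1])
    finally show "\<rho> powr t \<le> (\<Sum>j<N. \<bar>p j - v j (\<sigma> j)\<bar> powr t)" .
  qed
  show ?thesis
  proof (cases "L/16 \<le> (\<Sum>j\<in>T-S. p j)")
    case True
    have "(\<Sum>\<sigma>\<in>SG N. mu N pr \<sigma> * (if \<rho> \<le> lt_norm N t (\<lambda>j. p j - v j (\<sigma> j)) then 0 else 1)) = 0"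
    proof (rule sum.neutral, rule ballI)
      fix \<sigma> have "0 \<le> (a/2) * cnt \<sigma>" using a0 cnt0[of \<sigma>] by simp
      hence "L/16 \<le> (\<Sum>j\<in>T-S. p j) + (a/2) * cnt \<sigma>" using True by linarith
      thus "mu N pr \<sigma> * (if \<rho> \<le> lt_norm N t (\<lambda>j. p j - v j (\<sigma> j)) then 0 else 1) = 0" using goodI by simp
    qed
    thus ?thesis using e0 by simp
  next
    case False
    have split: "L = (\<Sum>j\<in>T-S. p j) + (\<Sum>j\<in>S. p j)" unfolding L_def by (rule sum.subset_diff[OF ST finT])
    have SL: "L/2 \<le> (\<Sum>j\<in>S. p j)" using False split L0 by linarith
    have prS: "(\<Sum>j\<in>S. pr j) = (\<Sum>j\<in>S. p j) / a"
      unfolding sum_divide_distrib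
      by (rule sum.cong) (auto simp: pr_def S_def aj_def)
    let ?K = "L / (8 * a)"
    have ind: "mu N pr \<sigma> * (if \<rho> \<le> lt_norm N t (\<lambda>j. p j - v j (\<sigma> j)) then 0 else 1) \<le> exp ?K * (mu N pr \<sigma> * exp (- cnt \<sigma>))" for \<sigma>
    proof (cases "\<rho> \<le> lt_norm N t (\<lambda>j. p j - v j (\<sigma> j))")
      case True thus ?thesis using mu0[of \<sigma>] by simp
    next
      case bad: False
      have "0 \<le> (\<Sum>j\<in>T-S. p j)" using pT by (intro sum_nonneg) auto
      hence "(a/2) * cnt \<sigma> < L/16" using goodI[of \<sigma>] bad by linarith
      hence "cnt \<sigma> < ?K" using a0 by (simp add: field_simps)
      hence "1 \<le> exp (?K - cnt \<sigma>)" by simp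
      hence "mu N pr \<sigma> * 1 \<le> mu N pr \<sigma> * exp (?K - cnt \<sigma>)" using mu0[of \<sigma>] by (intro mult_left_mono) auto
      thus ?thesis using bad by (simp add: exp_diff exp_minus field_simps)
    qed
    have "(\<Sum>\<sigma>\<in>SG N. mu N pr \<sigma> * (if \<rho> \<le> lt_norm N t (\<lambda>j. p j - v j (\<sigma> j)) then 0 else 1))
        \<le> exp ?K * (\<Sum>\<sigma>\<in>SG N. mu N pr \<sigma> * exp (- cnt \<sigma>))"
      unfolding sum_distrib_left by (rule sum_mono) (rule ind)
    also have "\<dots> \<le> exp ?K * exp (- (\<Sum>j\<in>S. pr j) / 2)" using mu_exp_cnt by (intro mult_left_mono) auto
    also have "\<dots> \<le> exp ?K * exp (- (2 * ?K))"
    proof -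
      have "2 * ?K \<le> (\<Sum>j\<in>S. pr j) / 2" unfolding prS using SL a0 by (simp add: field_simps)
      thus ?thesis by (intro mult_left_mono) auto
    qed
    also have "\<dots> = exp (- ?K)" by (simp add: exp_add[symmetric])
    also have "\<dots> \<le> 1 / ?K"
    proof -
      have K0: "0 < ?K" using L0 a0 by simp
      have "?K \<le> exp ?K" using exp_ge_add_one_self[of ?K] by linarith
      moreover have "0 < exp ?K * ?K" by (rule mult_pos_pos[OF exp_gt_zero K0])
      ultimately have "1 / exp ?K \<le> 1 / ?K" by (intro divide_left_mono) auto
      thus ?thesis by (simp add: exp_minus inverse_eq_divide)
    qed
    also have "\<dots> = 8 * \<epsilon> / ((real n * L)^2)" unfolding a_def using L0 n1 by (simp add: field_simps power2_eq_square)
    also have "\<dots> \<le> 8 * \<epsilon> / 1"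
    proof (rule divide_left_mono)
      show "1 \<le> (real n * L)^2" using nL by (simp add: one_le_power)
    qed (use e0 n1 L0 in auto)
    finally show ?thesis by simp
  qed
qed

end

context inst begin
lemma risk_bound:
  assumes "1 \<le> t" "0 < \<rho>" "\<rho> powr t \<le> (L/16) * (a/2) powr (t-1)"
  shows "1 - (3 * c + \<epsilon>) - 8 * \<epsilon> \<le> risk N n p t \<rho> \<psi>"
  apply (rule risk_lower[where pr = pr and v = v and D = DD])
  using pr01 v01 p1 DD0 mixb Db Bad[OF assms] by auto
end



lemma powr_calc:
  fixes \<epsilon> L t \<rho> :: real and n :: nat
  assumes e0: "0 < \<epsilon>" and e1: "\<epsilon> \<le> 1" and L0: "0 < L" and n1: "1 \<le> n" and t1: "1 \<le> t" and t2: "t \<le> 2"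
    and r0: "0 < \<rho>" and rB: "\<rho> < (\<epsilon>/32) * L powr ((2-t)/t) / real n powr ((2*t-2)/t)"
  shows "\<rho> powr t \<le> (L/16) * ((\<epsilon> / ((real n)^2 * L)) / 2) powr (t-1)"
proof -
  have n0: "0 < real n" using n1 by simp
  let ?B = "(\<epsilon>/32) * L powr ((2-t)/t) / real n powr ((2*t-2)/t)"
  let ?E = "(\<epsilon>/2) powr (t-1)" and ?Lt = "L powr (t-1)" and ?Nn = "real n powr (2*t-2)"
  have Lt: "0 < ?Lt" and Nn: "0 < ?Nn" and E: "0 \<le> ?E" using L0 n0 by auto
  have "\<rho> powr t \<le> ?B powr t" using rB r0 t1 by (intro powr_mono2) auto
  also have "?B powr t = (\<epsilon>/32) powr t * L powr (2-t) / ?Nn"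
  proof -
    have "?B powr t = ((\<epsilon>/32) powr t * (L powr ((2-t)/t)) powr t) / (real n powr ((2*t-2)/t)) powr t"
      using e0 L0 n0 by (simp add: powr_divide powr_mult)
    also have "(L powr ((2-t)/t)) powr t = L powr (2-t)" using t1 by (simp add: powr_powr)
    also have "(real n powr ((2*t-2)/t)) powr t = ?Nn" using t1 by (simp add: powr_powr)
    finally show ?thesis .
  qed
  also have "\<dots> \<le> ((1/16) * ?E) * L powr (2-t) / ?Nn"
  proof -
    have "(\<epsilon>/32) powr t = (\<epsilon>/32) * (\<epsilon>/32) powr (t-1)" using e0 by (simp add: powr_diff)
    also have "\<dots> \<le> (1/16) * ?E"
      using e0 e1 t1 by (intro mult_mono) (auto intro: powr_mono2)
    finally have "(\<epsilon>/32) powr t \<le> (1/16) * ?E" .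
    hence "(\<epsilon>/32) powr t * L powr (2-t) \<le> ((1/16) * ?E) * L powr (2-t)" by (intro mult_right_mono) auto
    thus ?thesis using Nn by (intro divide_right_mono) auto
  qed
  also have "\<dots> = (L/16) * ((\<epsilon> / ((real n)^2 * L)) / 2) powr (t-1)"
  proof -
    have "((\<epsilon> / ((real n)^2 * L)) / 2) = (\<epsilon>/2) / ((real n)^2 * L)" by simp
    hence X: "((\<epsilon> / ((real n)^2 * L)) / 2) powr (t-1) = ?E / (((real n)^2) powr (t-1) * ?Lt)"
      using e0 L0 n0 by (simp add: powr_divide powr_mult)
    have Y: "((real n)^2) powr (t-1) = ?Nn"
    proof -
      have "(real n)^2 = real n powr 2" using powr_realpow[of "real n" 2] n0 by simp
      hence "((real n)^2) powr (t-1) = real n powr (2 * (t-1))" by (metis powr_powr)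
      thus ?thesis by (simp add: algebra_simps)
    qed
    have Z: "L powr (2-t) = L / ?Lt" using L0 by (simp add: powr_diff power2_eq_square)
    have W: "((1/16) * e) * (L / lt) / nn = (L/16) * (e / (nn * lt))" if "lt \<noteq> 0" "nn \<noteq> 0" for e lt nn :: real
      using that by (simp add: field_simps)
    show ?thesis unfolding X Y Z using W Lt Nn by simp
  qed
  finally show ?thesis .
qed

lemma lt_norm_le:
  assumes "\<And>j. j < N \<Longrightarrow> \<bar>x j\<bar> \<le> 1" "1 \<le> t" "1 \<le> N"
  shows "lt_norm N t x \<le> real N"
proof -
  have "(\<Sum>j<N. \<bar>x j\<bar> powr t) \<le> (\<Sum>j<N. 1)"
  proof (rule sum_mono)
    fix j assume "j \<in> {..<N}"
    hence "\<bar>x j\<bar> powr t \<le> 1 powr t" using assms by (intro powr_mono2) auto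
    thus "\<bar>x j\<bar> powr t \<le> 1" by simp
  qed
  hence "(\<Sum>j<N. \<bar>x j\<bar> powr t) powr (1/t) \<le> real N powr (1/t)"
    using assms by (intro powr_mono2) (auto intro: sum_nonneg)
  also have "\<dots> \<le> real N powr 1" using assms by (intro powr_mono) auto
  finally show ?thesis unfolding lt_norm_def using assms by simp
qed

lemma risk_nonneg:
  assumes "\<And>j. j < N \<Longrightarrow> 0 \<le> p j \<and> p j \<le> 1"
  shows "0 \<le> risk N n p t \<rho> \<psi>"
proof -
  let ?S = "{bin_prob N n q (\<lambda>X. \<not> \<psi> X) | q. (\<forall>j<N. 0 \<le> q j \<and> q j \<le> 1) \<and> lt_norm N t (\<lambda>j. p j - q j) \<ge> \<rho>}"
  have bdd: "bdd_above (insert 0 ?S)"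
    by (rule bdd_aboveI[of _ 1]) (auto intro: bin_prob_le1)
  have "0 \<le> Sup (insert 0 ?S)" using bdd by (intro cSup_upper) auto
  moreover have "0 \<le> bin_prob N n p \<psi>" using assms by (rule bin_prob_le1)
  ultimately show ?thesis unfolding risk_def by simp
qed

lemma minimax_ge:
  assumes "\<And>\<psi>. b \<le> risk N n p t \<rho> \<psi>"
  shows "b \<le> minimax_risk N n p t \<rho>"
  unfolding minimax_risk_def by (rule cInf_greatest) (use assms in auto)

lemma risk_empty:
  assumes "\<And>q. \<forall>j<N. 0 \<le> q j \<and> q j \<le> 1 \<Longrightarrow> lt_norm N t (\<lambda>j. p j - q j) < \<rho>"
  shows "risk N n p t \<rho> \<psi> = bin_prob N n p \<psi>"
proof -
  have E: "{bin_prob N n q (\<lambda>X. \<not> \<psi> X) | q. (\<forall>j<N. 0 \<le> q j \<and> q j \<le> 1) \<and> lt_norm N t (\<lambda>j. p j - q j) \<ge> \<rho>} = {}"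
  proof (rule equals0I)
    fix x assume "x \<in> {bin_prob N n q (\<lambda>X. \<not> \<psi> X) | q. (\<forall>j<N. 0 \<le> q j \<and> q j \<le> 1) \<and> lt_norm N t (\<lambda>j. p j - q j) \<ge> \<rho>}"
    then obtain q where q: "\<forall>j<N. 0 \<le> q j \<and> q j \<le> 1" "\<rho> \<le> lt_norm N t (\<lambda>j. p j - q j)" by auto
    show False using assms[OF q(1)] q(2) by linarith
  qed
  show ?thesis unfolding risk_def E by simp
qed

lemma radius_set_nonempty:
  assumes p01: "\<And>j. j < N \<Longrightarrow> 0 \<le> p j \<and> p j \<le> 1" and "1 \<le> t" "1 \<le> N" "0 \<le> \<eta>"
  shows "minimax_risk N n p t (real N + 1) \<le> \<eta>"
proof -
  let ?S = "{bin_prob N n q (\<lambda>X. \<not> (\<lambda>_. False) X) | q. (\<forall>j<N. 0 \<le> q j \<and> q j \<le> 1) \<and> lt_norm N t (\<lambda>j. p j - q j) \<ge> real N + 1}"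
  have "?S = {}"
  proof -
    { fix q :: "nat \<Rightarrow> real" assume q: "\<forall>j<N. 0 \<le> q j \<and> q j \<le> 1"
      have "lt_norm N t (\<lambda>j. p j - q j) \<le> real N"
      proof (rule lt_norm_le)
        fix j assume j: "j < N"
        have "0 \<le> p j" "p j \<le> 1" "0 \<le> q j" "q j \<le> 1" using q p01 j by auto
        thus "\<bar>p j - q j\<bar> \<le> 1" by (auto simp: abs_le_iff)
      qed (use assms in auto)
      hence "\<not> lt_norm N t (\<lambda>j. p j - q j) \<ge> real N + 1" by simp }
    thus ?thesis by auto
  qed
  hence r0: "risk N n p t (real N + 1) (\<lambda>_. False) = 0"
    by (subst risk_empty) (auto simp: bin_prob_def)
  have "minimax_risk N n p t (real N + 1) \<le> risk N n p t (real N + 1) (\<lambda>_. False)"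
    unfolding minimax_risk_def
    by (rule cInf_lower) (auto intro!: bdd_belowI[of _ 0] risk_nonneg p01)
  thus ?thesis using r0 assms by simp
qed

theorem lemmaA4:
  fixes \<eta> :: real
  assumes "0 < \<eta>" "\<eta> < 1"
  shows "\<exists>c0 > 0. \<forall>cI. 0 < cI \<and> cI \<le> c0 \<longrightarrow>
    (\<exists>C > 0. \<forall>(N::nat) (n::nat) (p::nat \<Rightarrow> real) (t::real).
       2 \<le> N \<and> 2 \<le> n \<and> even n \<and>
       (\<forall>j<N. 0 \<le> p j \<and> p j \<le> 1 / 2) \<and>
       (\<forall>i j. i \<le> j \<and> j < N \<longrightarrow> p j \<le> p i) \<and>
       1 \<le> t \<and> t \<le> 2 \<and>
       tail_l1 N p (tail_index N n p cI) \<ge> 1 / real n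
       \<longrightarrow> critical_radius N n p t \<eta> \<ge>
            C * tail_l1 N p (tail_index N n p cI) powr ((2 - t) / t)
              / real n powr ((2 * t - 2) / t))"
proof -
  define \<delta> where "\<delta> = 1 - \<eta>"
  have d0: "0 < \<delta>" "\<delta> < 1" using assms unfolding \<delta>_def by auto
  define \<epsilon> where "\<epsilon> = \<delta> / 20"
  have eps: "0 < \<epsilon>" "\<epsilon> \<le> 1" using d0 unfolding \<epsilon>_def by auto
  show ?thesis
  proof (rule exI[of _ "\<delta> / 10"], intro conjI allI impI)
    show "0 < \<delta> / 10" using d0 by simp
    fix cI assume cI: "0 < cI \<and> cI \<le> \<delta> / 10"
    show "\<exists>C > 0. \<forall>(N::nat) (n::nat) (p::nat \<Rightarrow> real) (t::real).
       2 \<le> N \<and> 2 \<le> n \<and> even n \<and>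
       (\<forall>j<N. 0 \<le> p j \<and> p j \<le> 1 / 2) \<and>
       (\<forall>i j. i \<le> j \<and> j < N \<longrightarrow> p j \<le> p i) \<and>
       1 \<le> t \<and> t \<le> 2 \<and>
       tail_l1 N p (tail_index N n p cI) \<ge> 1 / real n
       \<longrightarrow> critical_radius N n p t \<eta> \<ge>
            C * tail_l1 N p (tail_index N n p cI) powr ((2 - t) / t)
              / real n powr ((2 * t - 2) / t)"
    proof (rule exI[of _ "\<epsilon> / 32"], intro conjI allI impI)
      show "0 < \<epsilon> / 32" using eps by simp
      fix N n :: nat and p :: "nat \<Rightarrow> real" and t :: real
      assume H: "2 \<le> N \<and> 2 \<le> n \<and> even n \<and>
       (\<forall>j<N. 0 \<le> p j \<and> p j \<le> 1 / 2) \<and>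
       (\<forall>i j. i \<le> j \<and> j < N \<longrightarrow> p j \<le> p i) \<and>
       1 \<le> t \<and> t \<le> 2 \<and>
       tail_l1 N p (tail_index N n p cI) \<ge> 1 / real n"
      define I where "I = tail_index N n p cI"
      define T where "T = {I..<N}"
      have p01: "\<And>j. j < N \<Longrightarrow> 0 \<le> p j \<and> p j \<le> 1/2" using H by auto
      have t1: "1 \<le> t" and t2: "t \<le> 2" using H by auto
      have n1: "1 \<le> n" and N1: "1 \<le> N" using H by auto
      have Iprop: "I \<le> N \<and> (\<Sum>j\<in>{I..<N}. (p j)^2) \<le> cI / (real n)^2"
        unfolding I_def tail_index_def
        by (rule LeastI[of _ N]) (use cI in auto)
      have TN: "T \<subseteq> {..<N}" unfolding T_def by auto
      have Ldef: "tail_l1 N p I = (\<Sum>j\<in>T. p j)"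
        unfolding tail_l1_def T_def using p01 by (intro sum.cong) auto
      have Lb: "1 / real n \<le> (\<Sum>j\<in>T. p j)" using H Ldef unfolding I_def by simp
      interpret inst N n p T cI \<epsilon>
        using n1 p01 TN Iprop Lb eps cI d0 unfolding T_def by unfold_locales auto
      have LL: "L = tail_l1 N p I" unfolding L_def Ldef ..
      let ?B = "\<epsilon> / 32 * L powr ((2 - t) / t) / real n powr ((2 * t - 2) / t)"
      define R where "R = {\<rho>. \<rho> > 0 \<and> minimax_risk N n p t \<rho> \<le> \<eta>}"
      have Rne: "R \<noteq> {}"
      proof -
        have "minimax_risk N n p t (real N + 1) \<le> \<eta>"
          using p1 t1 N1 assms by (intro radius_set_nonempty) auto
        thus ?thesis unfolding R_def by (intro ex_in_conv[THEN iffD1] exI[of _ "real N + 1"]) auto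
      qed
      have "?B \<le> Inf R"
      proof (rule cInf_greatest[OF Rne])
        fix \<rho> assume "\<rho> \<in> R"
        hence r0: "0 < \<rho>" and rm: "minimax_risk N n p t \<rho> \<le> \<eta>" unfolding R_def by auto
        show "?B \<le> \<rho>"
        proof (rule ccontr)
          assume "\<not> ?B \<le> \<rho>"
          hence rB: "\<rho> < ?B" by simp
          have "\<rho> powr t \<le> (L/16) * ((\<epsilon> / ((real n)^2 * L)) / 2) powr (t-1)"
            by (rule powr_calc[OF eps(1) eps(2) L0 n1 t1 t2 r0 rB])
          hence hr: "\<rho> powr t \<le> (L/16) * (a/2) powr (t-1)" unfolding a_def .
          have "1 - (3 * cI + \<epsilon>) - 8 * \<epsilon> \<le> minimax_risk N n p t \<rho>"
            by (rule minimax_ge, rule risk_bound[OF t1 r0 hr])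
          moreover have "\<eta> < 1 - (3 * cI + \<epsilon>) - 8 * \<epsilon>" using cI[THEN conjunct2] d0 unfolding \<epsilon>_def \<delta>_def by (simp add: field_simps)
          ultimately show False using rm by linarith
        qed
      qed
      thus "critical_radius N n p t \<eta> \<ge> \<epsilon> / 32 * tail_l1 N p (tail_index N n p cI) powr ((2 - t) / t)
              / real n powr ((2 * t - 2) / t)"
        unfolding critical_radius_def R_def[symmetric] LL I_def .
    qed
  qed
qed

end
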